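(* Let $d\ge 2$, $L\ge 2$ be integers and let $\mu_0^\star,\mu_1^\star\in\mathbb{S}^{d-1}$ be orthonormal. Let the rows $X_1,\dots,X_L$ of $\mathbb{X}\in\mathbb{R}^{L\times d}$ be i.i.d. with law $\frac12\delta_{\mu_0^\star}+\frac12\delta_{\mu_1^\star}$. Let $\lambda\in\,]0,\frac{L+1}{L+3}]$. Then there exists $\bar\gamma>0$ such that for any step size $0<\gamma<\bar\gamma$ and for a generic initialization $(\mu_0^0,\mu_1^0)\in\tilde{\mathcal{M}}$, the projected Riemannian gradient descent iterates $(\mu_0^k,\mu_1^k)$ for the risk $\mathcal{R}$ converge to $(\pm\mu_0^\star,\pm\mu_1^\star)$.
   Context: For $\mu\in\mathbb{R}^d$ the linear attention head is $H^{\mathrm{lin},\mu}(\mathbb{X})_\ell=\frac{2}{L}\sum_{k=1}^L\lambda\,(X_\ell^\top\mu\mu^\top X_k)\,X_k$, and $T^{\mathrm{lin},\mu_0,\mu_1}=H^{\mathrm{lin},\mu_0}+H^{\mathrm{lin},\mu_1}$. The risk is $\mathcal{R}(\mu_0,\mu_1)=\frac1L\sum_{\ell=1}^L\mathbb{E}\|X_\ell-T^{\mathrm{lin},\mu_0,\mu_1}(\mathbb{X})_\ell\|_2^2$, a smooth function on $\mathbb{R}^d\times\mathbb{R}^d$. Given $(\mu_0^0,\mu_1^0)\in(\mathbb{S}^{d-1})^2$ and $\gamma>0$, the iterates are, for $i\in\{0,1\}$, $\mu_i^{k+1}=\dfrac{\mu_i^k-\gamma(I_d-\mu_i^k(\mu_i^k)^\top)\nabla_{\mu_i}\mathcal{R}(\mu_0^k,\mu_1^k)}{\|\mu_i^k-\gamma(I_d-\mu_i^k(\mu_i^k)^\top)\nabla_{\mu_i}\mathcal{R}(\mu_0^k,\mu_1^k)\|_2}$.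 $\tilde{\mathcal{M}}=\{(\mu_0,\mu_1)\in(\mathbb{S}^{d-1})^2:\langle\mu_1^\star,\mu_0\rangle=0,\ \langle\mu_0^\star,\mu_1\rangle=0\}$. "Generic initialization" means the set of initializations in $\tilde{\mathcal{M}}$ for which the conclusion fails has Lebesgue measure zero with respect to $\tilde{\mathcal{M}}$. Convergence to $(\pm\mu_0^\star,\pm\mu_1^\star)$ means convergence to $(s_0\mu_0^\star,s_1\mu_1^\star)$ for some signs $s_0,s_1\in\{-1,1\}$. *)

theory Defs
  imports "HOL-Analysis.Analysis"
begin

definition lin_head :: "nat \<Rightarrow> real \<Rightarrow> real^'d \<Rightarrow> (nat \<Rightarrow> real^'d) \<Rightarrow> nat \<Rightarrow> real^'d" where
  "lin_head L lam mu X l =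
     (2 / real L) *\<^sub>R (\<Sum>k<L. (lam * ((X l \<bullet> mu) * (mu \<bullet> X k))) *\<^sub>R X k)"

definition lin_transf :: "nat \<Rightarrow> real \<Rightarrow> real^'d \<Rightarrow> real^'d \<Rightarrow> (nat \<Rightarrow> real^'d) \<Rightarrow> nat \<Rightarrow> real^'d" where
  "lin_transf L lam mu0 mu1 X l = lin_head L lam mu0 X l + lin_head L lam mu1 X l"

text \<open>Risk R(mu0,mu1) = (1/L) sum_l E ||X_l - T(X)_l||^2 where the rows X_1..X_L are i.i.d.
  with law (1/2) delta_{m0} + (1/2) delta_{m1}.  The expectation over this discrete law is
  the uniform average over all 2^L choices s : {0..L-1} -> bool (row k is m1 if s k, else m0).\<close>
definition sample :: "real^'d \<Rightarrow> real^'d \<Rightarrow> (nat \<Rightarrow> bool) \<Rightarrow> nat \<Rightarrow> real^'d" where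
  "sample m0 m1 s k = (if s k then m1 else m0)"

definition risk :: "nat \<Rightarrow> real \<Rightarrow> real^'d \<Rightarrow> real^'d \<Rightarrow> real^'d \<Rightarrow> real^'d \<Rightarrow> real" where
  "risk L lam m0 m1 mu0 mu1 =
     (1 / real L) * (\<Sum>l<L.
        (1 / 2 ^ L) * (\<Sum>s \<in> {..<L} \<rightarrow>\<^sub>E (UNIV :: bool set).
            (norm (sample m0 m1 s l - lin_transf L lam mu0 mu1 (sample m0 m1 s) l))\<^sup>2))"

definition grad0 :: "(real^'d \<Rightarrow> real^'d \<Rightarrow> real) \<Rightarrow> real^'d \<Rightarrow> real^'d \<Rightarrow> real^'d" where
  "grad0 R mu0 mu1 = (THE D. GDERIV (\<lambda>x. R x mu1) mu0 :> D)"

definition grad1 :: "(real^'d \<Rightarrow> real^'d \<Rightarrow> real) \<Rightarrow> real^'d \<Rightarrow> real^'d \<Rightarrow> real^'d" where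
  "grad1 R mu0 mu1 = (THE D. GDERIV (\<lambda>x. R mu0 x) mu1 :> D)"

definition rgd_update :: "real \<Rightarrow> real^'d \<Rightarrow> real^'d \<Rightarrow> real^'d" where
  "rgd_update gam mu g =
     (let v = mu - gam *\<^sub>R (g - (mu \<bullet> g) *\<^sub>R mu) in (1 / norm v) *\<^sub>R v)"

primrec rgd_iter :: "(real^'d \<Rightarrow> real^'d \<Rightarrow> real) \<Rightarrow> real \<Rightarrow> (real^'d) \<times> (real^'d)
     \<Rightarrow> nat \<Rightarrow> (real^'d) \<times> (real^'d)" where
  "rgd_iter R gam init 0 = init"
| "rgd_iter R gam init (Suc k) =
     (let (a, b) = rgd_iter R gam init k in
       (rgd_update gam a (grad0 R a b), rgd_update gam b (grad1 R a b)))"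

definition Mtilde :: "real^'d \<Rightarrow> real^'d \<Rightarrow> ((real^'d) \<times> (real^'d)) set" where
  "Mtilde m0 m1 = {(a, b). norm a = 1 \<and> norm b = 1 \<and> m1 \<bullet> a = 0 \<and> m0 \<bullet> b = 0}"

text \<open>Null sets w.r.t. the (Riemannian volume) measure of M~.  M~ = S(V0) x S(V1) with
  V0 = m1^perp, V1 = m0^perp.  The map Phi(a,b) = (normalize(P0 a), normalize(P1 b))
  (P_i orthogonal projections) is a submersion from (an open full-measure subset of)
  R^d x R^d onto M~ which pushes Gaussian measure to the uniform measure; hence N \<subseteq> M~
  is null in M~ iff Phi^{-1}(N) is Lebesgue-null in R^d x R^d.\<close>
definition Mtilde_chart :: "real^'d \<Rightarrow> real^'d \<Rightarrow> (real^'d) \<times> (real^'d) \<Rightarrow> (real^'d) \<times> (real^'d)" where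
  "Mtilde_chart m0 m1 p =
     (let a = fst p - (fst p \<bullet> m1) *\<^sub>R m1; b = snd p - (snd p \<bullet> m0) *\<^sub>R m0
      in ((1 / norm a) *\<^sub>R a, (1 / norm b) *\<^sub>R b))"

definition Mtilde_null :: "real^'d \<Rightarrow> real^'d \<Rightarrow> ((real^'d) \<times> (real^'d)) set \<Rightarrow> bool" where
  "Mtilde_null m0 m1 N \<longleftrightarrow>
     N \<subseteq> Mtilde m0 m1 \<and> {p. Mtilde_chart m0 m1 p \<in> N} \<in> null_sets lebesgue"

end

theory Submission
  imports Defs
begin


definition cntb :: "nat \<Rightarrow> bool \<Rightarrow> (nat \<Rightarrow> bool) \<Rightarrow> real" where
  "cntb L b s = real (card {k\<in>{..<L}. s k = b})"

lemma sum_bool: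
  fixes F :: "bool \<Rightarrow> 'a::real_vector"
  shows "(\<Sum>k<L. F (s k)) = cntb L True s *\<^sub>R F True + cntb L False s *\<^sub>R F False"
proof -
  have "(\<Sum>k<L. F (s k)) = (\<Sum>k<L. if s k then F True else F False)"
    by (rule sum.cong) auto
  also have "\<dots> = sum (\<lambda>_. F True) ({..<L} \<inter> {x. s x}) + sum (\<lambda>_. F False) ({..<L} \<inter> - {x. s x})"
    by (rule sum.If_cases) simp
  also have "{..<L} \<inter> {x. s x} = {k\<in>{..<L}. s k = True}" by auto
  also have "{..<L} \<inter> - {x. s x} = {k\<in>{..<L}. s k = False}" by auto
  finally show ?thesis by (simp add: cntb_def sum_constant_scaleR)
qed

lemma pow_moments:
  assumes "finite S"
  shows "(\<Sum>A\<in>Pow S. (1::real)) = 2 ^ card S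
    \<and> (\<Sum>A\<in>Pow S. real (card A)) * 2 = real (card S) * 2 ^ card S
    \<and> (\<Sum>A\<in>Pow S. real (card A) ^ 2) * 4 = real (card S) * (real (card S) + 1) * 2 ^ card S
    \<and> (\<Sum>A\<in>Pow S. real (card A) ^ 3) * 8 = real (card S) ^ 2 * (real (card S) + 3) * 2 ^ card S"
  using assms
proof (induction S rule: finite_induct)
  case empty
  then show ?case by simp
next
  case (insert x F)
  have disj: "Pow F \<inter> insert x ` Pow F = {}" using insert by auto
  have inj: "inj_on (insert x) (Pow F)"
  proof (rule inj_onI)
    fix A B assume "A \<in> Pow F" "B \<in> Pow F" "insert x A = insert x B"
    then have "insert x A - {x} = insert x B - {x}" "x \<notin> A" "x \<notin> B" using insert by auto
    then show "A = B" by auto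
  qed
  have cardins: "\<And>A. A \<in> Pow F \<Longrightarrow> card (insert x A) = card A + 1"
  proof -
    fix A assume "A \<in> Pow F"
    then have "finite A" "x \<notin> A" using insert finite_subset by auto
    then show "card (insert x A) = card A + 1" by simp
  qed
  have fin: "finite (Pow F)" "finite (insert x ` Pow F)" using insert by auto
  have split: "\<And>f::nat\<Rightarrow>real. (\<Sum>A\<in>Pow (insert x F). f (card A)) = (\<Sum>A\<in>Pow F. f (card A)) + (\<Sum>A\<in>Pow F. f (card A + 1))"
  proof -
    fix f :: "nat \<Rightarrow> real"
    have "(\<Sum>A\<in>Pow (insert x F). f (card A)) = (\<Sum>A\<in>Pow F. f (card A)) + (\<Sum>A\<in>insert x ` Pow F. f (card A))"
      by (simp add: Pow_insert sum.union_disjoint[OF fin disj])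
    also have "(\<Sum>A\<in>insert x ` Pow F. f (card A)) = (\<Sum>A\<in>Pow F. f (card (insert x A)))"
      by (simp add: sum.reindex[OF inj])
    also have "\<dots> = (\<Sum>A\<in>Pow F. f (card A + 1))"
      by (rule sum.cong) (auto simp: cardins)
    finally show "(\<Sum>A\<in>Pow (insert x F). f (card A)) = (\<Sum>A\<in>Pow F. f (card A)) + (\<Sum>A\<in>Pow F. f (card A + 1))" .
  qed
  have s0: "(\<Sum>A\<in>Pow (insert x F). (1::real)) = 2 * (\<Sum>A\<in>Pow F. 1)"
    using split[of "\<lambda>_. 1"] by simp
  have s1: "(\<Sum>A\<in>Pow (insert x F). real (card A)) = 2 * (\<Sum>A\<in>Pow F. real (card A)) + (\<Sum>A\<in>Pow F. 1)"
    using split[of "\<lambda>n. real n"] by (simp add: sum.distrib)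
  have s2: "(\<Sum>A\<in>Pow (insert x F). real (card A)^2) = 2 * (\<Sum>A\<in>Pow F. real (card A)^2) + 2 * (\<Sum>A\<in>Pow F. real (card A)) + (\<Sum>A\<in>Pow F. 1)"
    using split[of "\<lambda>n. real n ^ 2"] by (simp add: sum.distrib power2_eq_square algebra_simps sum_distrib_left)
  have s3: "(\<Sum>A\<in>Pow (insert x F). real (card A)^3) = 2 * (\<Sum>A\<in>Pow F. real (card A)^3) + 3 * (\<Sum>A\<in>Pow F. real (card A)^2) + 3 * (\<Sum>A\<in>Pow F. real (card A)) + (\<Sum>A\<in>Pow F. 1)"
    using split[of "\<lambda>n. real n ^ 3"] by (simp add: sum.distrib power3_eq_cube power2_eq_square algebra_simps sum_distrib_left)
  have c: "card (insert x F) = card F + 1" using insert by simp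
  show ?case using insert.IH unfolding s0 s1 s2 s3 c
    by (simp add: algebra_simps power2_eq_square power3_eq_cube)
qed

lemma pie_pow:
  "(\<Sum>s\<in>{..<L} \<rightarrow>\<^sub>E (UNIV::bool set). f (cntb L b s)) = (\<Sum>A\<in>Pow {..<L}. f (real (card A)))"
proof (rule sum.reindex_bij_witness[where i="\<lambda>A. restrict (\<lambda>k. if k\<in>A then b else \<not>b) {..<L}"
      and j="\<lambda>s. {k\<in>{..<L}. s k = b}"])
  fix s assume s: "s \<in> {..<L} \<rightarrow>\<^sub>E (UNIV::bool set)"
  show "restrict (\<lambda>k. if k \<in> {k \<in> {..<L}. s k = b} then b else \<not> b) {..<L} = s"
  proof
    fix k show "restrict (\<lambda>k. if k \<in> {k \<in> {..<L}. s k = b} then b else \<not> b) {..<L} k = s k"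
      using s by (cases "k < L") (auto simp: PiE_def extensional_def)
  qed
  show "{k \<in> {..<L}. s k = b} \<in> Pow {..<L}" by auto
  show "f (real (card {k \<in> {..<L}. s k = b})) = f (cntb L b s)" by (simp add: cntb_def)
next
  fix A assume "A \<in> Pow {..<(L::nat)}"
  then show "{k \<in> {..<L}. restrict (\<lambda>k. if k \<in> A then b else \<not> b) {..<L} k = b} = A" by auto
  show "restrict (\<lambda>k. if k \<in> A then b else \<not> b) {..<L} \<in> {..<L} \<rightarrow>\<^sub>E UNIV" by auto
qed

lemma moments:
  "(\<Sum>s\<in>{..<L} \<rightarrow>\<^sub>E (UNIV::bool set). cntb L b s ^ 2) * 4 = real L * (real L + 1) * 2 ^ L"
  "(\<Sum>s\<in>{..<L} \<rightarrow>\<^sub>E (UNIV::bool set). cntb L b s ^ 3) * 8 = real L ^ 2 * (real L + 3) * 2 ^ L"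
  using pie_pow[of "\<lambda>x. x^2" L b] pie_pow[of "\<lambda>x. x^3" L b] pow_moments[of "{..<L}"] by auto

definition Gf :: "real^'d \<Rightarrow> real^'d \<Rightarrow> real^'d \<Rightarrow> real^'d \<Rightarrow> real" where
  "Gf mu0 mu1 u v = (u \<bullet> mu0) * (mu0 \<bullet> v) + (u \<bullet> mu1) * (mu1 \<bullet> v)"

lemma head_sample:
  "lin_head L lam mu (sample m0 m1 s) l =
     (2 / real L * lam * cntb L True s * ((sample m0 m1 s l \<bullet> mu) * (mu \<bullet> m1))) *\<^sub>R m1
   + (2 / real L * lam * cntb L False s * ((sample m0 m1 s l \<bullet> mu) * (mu \<bullet> m0))) *\<^sub>R m0"
proof -
  let ?F = "\<lambda>b. (lam * ((sample m0 m1 s l \<bullet> mu) * (mu \<bullet> (if b then m1 else m0)))) *\<^sub>R (if b then m1 else m0)"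
  have "(\<Sum>k<L. (lam * ((sample m0 m1 s l \<bullet> mu) * (mu \<bullet> sample m0 m1 s k))) *\<^sub>R sample m0 m1 s k)
      = (\<Sum>k<L. ?F (s k))" by (simp add: sample_def[of m0 m1 s])
  also have "\<dots> = cntb L True s *\<^sub>R ?F True + cntb L False s *\<^sub>R ?F False" by (rule sum_bool)
  finally show ?thesis unfolding lin_head_def by (simp add: scaleR_add_right scaleR_scaleR mult_ac)
qed

lemma transf_sample:
  "lin_transf L lam mu0 mu1 (sample m0 m1 s) l =
     (2 / real L * lam * cntb L True s * Gf mu0 mu1 (sample m0 m1 s l) m1) *\<^sub>R m1
   + (2 / real L * lam * cntb L False s * Gf mu0 mu1 (sample m0 m1 s l) m0) *\<^sub>R m0"
  unfolding lin_transf_def head_sample Gf_def by (simp add: algebra_simps)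

lemma norm_comb:
  fixes m0 m1 :: "real^'d"
  assumes "norm m0 = 1" "norm m1 = 1" "m0 \<bullet> m1 = 0"
  shows "(norm (m0 - (a *\<^sub>R m1 + b *\<^sub>R m0)))\<^sup>2 = (1 - b)\<^sup>2 + a\<^sup>2"
    "(norm (m1 - (a *\<^sub>R m1 + b *\<^sub>R m0)))\<^sup>2 = (1 - a)\<^sup>2 + b\<^sup>2"
proof -
  have e: "m0 \<bullet> m0 = 1" "m1 \<bullet> m1 = 1" "m1 \<bullet> m0 = 0" using assms by (auto simp: norm_eq_1 inner_commute)
  show "(norm (m0 - (a *\<^sub>R m1 + b *\<^sub>R m0)))\<^sup>2 = (1 - b)\<^sup>2 + a\<^sup>2"
    unfolding power2_norm_eq_inner
    by (simp add: inner_diff_left inner_diff_right inner_add_left inner_add_right e assms power2_eq_square algebra_simps)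
  show "(norm (m1 - (a *\<^sub>R m1 + b *\<^sub>R m0)))\<^sup>2 = (1 - a)\<^sup>2 + b\<^sup>2"
    unfolding power2_norm_eq_inner
    by (simp add: inner_diff_left inner_diff_right inner_add_left inner_add_right e assms power2_eq_square algebra_simps)
qed

definition Ecf :: "nat \<Rightarrow> real \<Rightarrow> real^'d \<Rightarrow> real^'d \<Rightarrow> real^'d \<Rightarrow> real^'d \<Rightarrow> (nat \<Rightarrow> bool) \<Rightarrow> bool \<Rightarrow> real" where
  "Ecf L lam m0 m1 mu0 mu1 s b = (if b then
      (2 / real L * lam * cntb L False s * Gf mu0 mu1 m1 m0)\<^sup>2 + (1 - 2 / real L * lam * cntb L True s * Gf mu0 mu1 m1 m1)\<^sup>2
    else (1 - 2 / real L * lam * cntb L False s * Gf mu0 mu1 m0 m0)\<^sup>2 + (2 / real L * lam * cntb L True s * Gf mu0 mu1 m0 m1)\<^sup>2)"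

lemma risk_cf:
  fixes m0 m1 :: "real^'d"
  assumes "norm m0 = 1" "norm m1 = 1" "m0 \<bullet> m1 = 0"
  shows "risk L lam m0 m1 mu0 mu1 = (1 / real L) * ((1 / 2 ^ L) *
    (\<Sum>s\<in>{..<L} \<rightarrow>\<^sub>E (UNIV::bool set). cntb L True s * Ecf L lam m0 m1 mu0 mu1 s True
        + cntb L False s * Ecf L lam m0 m1 mu0 mu1 s False))"
proof -
  have pt: "(norm (sample m0 m1 s l - lin_transf L lam mu0 mu1 (sample m0 m1 s) l))\<^sup>2
      = Ecf L lam m0 m1 mu0 mu1 s (s l)" for s l
    unfolding transf_sample
    by (cases "s l") (simp_all add: sample_def Ecf_def norm_comb[OF assms])
  have "risk L lam m0 m1 mu0 mu1 = (1 / real L) * ((1 / 2 ^ L) *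
      (\<Sum>s\<in>{..<L} \<rightarrow>\<^sub>E (UNIV::bool set). \<Sum>l<L. Ecf L lam m0 m1 mu0 mu1 s (s l)))"
    unfolding risk_def pt sum_distrib_left[symmetric] by (simp add: sum.swap[of _ "{..<L}"])
  also have "\<dots> = (1 / real L) * ((1 / 2 ^ L) *
    (\<Sum>s\<in>{..<L} \<rightarrow>\<^sub>E (UNIV::bool set). cntb L True s * Ecf L lam m0 m1 mu0 mu1 s True
        + cntb L False s * Ecf L lam m0 m1 mu0 mu1 s False))"
    using sum_bool[where F="Ecf L lam m0 m1 mu0 mu1 _"] by simp
  finally show ?thesis .
qed

lemma grad_deriv0:
  fixes m0 m1 a b :: "real^'d"
  assumes o: "norm m0 = 1" "norm m1 = 1" "m0 \<bullet> m1 = 0"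
    and ab: "a \<bullet> m1 = 0" "b \<bullet> m0 = 0"
  shows "((\<lambda>x. risk L lam m0 m1 x b) has_derivative (\<lambda>h. h \<bullet>
     ((- (1 / real L) * ((1 / 2 ^ L) * (\<Sum>s\<in>{..<L} \<rightarrow>\<^sub>E (UNIV::bool set).
        cntb L False s * (2 * (1 - 2 / real L * lam * cntb L False s * (a \<bullet> m0)^2) * (2 / real L * lam * cntb L False s * (2 * (a \<bullet> m0)))))))
      *\<^sub>R m0))) (at a)"
proof -
  let ?c = "2 / real L * lam"
  have b0: "m0 \<bullet> b = 0" using ab by (simp add: inner_commute)
  have a1: "m1 \<bullet> a = 0" using ab by (simp add: inner_commute)
  have fx: "(\<lambda>x. risk L lam m0 m1 x b) = (\<lambda>x. (1 / real L) * ((1 / 2 ^ L) *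
    (\<Sum>s\<in>{..<L} \<rightarrow>\<^sub>E (UNIV::bool set).
       cntb L True s * ((?c * cntb L False s * ((m1 \<bullet> x) * (x \<bullet> m0)))\<^sup>2 + (1 - ?c * cntb L True s * ((m1 \<bullet> x) * (x \<bullet> m1) + (m1 \<bullet> b) * (b \<bullet> m1)))\<^sup>2)
     + cntb L False s * ((1 - ?c * cntb L False s * ((m0 \<bullet> x) * (x \<bullet> m0)))\<^sup>2 + (?c * cntb L True s * ((m0 \<bullet> x) * (x \<bullet> m1)))\<^sup>2))))"
    by (rule ext, unfold risk_cf[OF o] Ecf_def Gf_def) (simp add: ab b0)
  show ?thesis unfolding fx
    apply (rule has_derivative_eq_rhs)
     apply (rule derivative_eq_intros | simp)+
    apply (rule ext)
    apply (simp only: sum_divide_distrib sum_distrib_right sum_negf[symmetric])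
    apply (rule sum.cong, rule refl)
    apply (simp add: a1 ab inner_commute[of m0] inner_commute[of m1] field_simps power2_eq_square)
    done
qed

lemma grad_deriv1:
  fixes m0 m1 a b :: "real^'d"
  assumes o: "norm m0 = 1" "norm m1 = 1" "m0 \<bullet> m1 = 0"
    and ab: "a \<bullet> m1 = 0" "b \<bullet> m0 = 0"
  shows "((\<lambda>x. risk L lam m0 m1 a x) has_derivative (\<lambda>h. h \<bullet>
     ((- (1 / real L) * ((1 / 2 ^ L) * (\<Sum>s\<in>{..<L} \<rightarrow>\<^sub>E (UNIV::bool set).
        cntb L True s * (2 * (1 - 2 / real L * lam * cntb L True s * (b \<bullet> m1)^2) * (2 / real L * lam * cntb L True s * (2 * (b \<bullet> m1)))))))
      *\<^sub>R m1))) (at b)"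
proof -
  let ?c = "2 / real L * lam"
  have b0: "m0 \<bullet> b = 0" using ab by (simp add: inner_commute)
  have a1: "m1 \<bullet> a = 0" using ab by (simp add: inner_commute)
  have fx: "(\<lambda>x. risk L lam m0 m1 a x) = (\<lambda>x. (1 / real L) * ((1 / 2 ^ L) *
    (\<Sum>s\<in>{..<L} \<rightarrow>\<^sub>E (UNIV::bool set).
       cntb L True s * ((?c * cntb L False s * ((m1 \<bullet> x) * (x \<bullet> m0)))\<^sup>2 + (1 - ?c * cntb L True s * ((m1 \<bullet> x) * (x \<bullet> m1)))\<^sup>2)
     + cntb L False s * ((1 - ?c * cntb L False s * ((m0 \<bullet> a) * (a \<bullet> m0) + (m0 \<bullet> x) * (x \<bullet> m0)))\<^sup>2 + (?c * cntb L True s * ((m0 \<bullet> x) * (x \<bullet> m1)))\<^sup>2))))"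
    by (rule ext, unfold risk_cf[OF o] Ecf_def Gf_def) (simp add: ab a1)
  show ?thesis unfolding fx
    apply (rule has_derivative_eq_rhs)
     apply (rule derivative_eq_intros | simp)+
    apply (rule ext)
    apply (simp only: sum_divide_distrib sum_distrib_right sum_negf[symmetric])
    apply (rule sum.cong, rule refl)
    apply (simp add: b0 ab inner_commute[of m0] inner_commute[of m1] field_simps power2_eq_square)
    done
qed

definition Kf :: "nat \<Rightarrow> real \<Rightarrow> real \<Rightarrow> real" where
  "Kf L lam u = 2 / real L * lam * (real L + 1 - lam * (real L + 3) * u)"

lemma sum_simp:
  assumes "L > 0"
  shows "(1 / real L) * ((1 / 2 ^ L) * (\<Sum>s\<in>{..<L} \<rightarrow>\<^sub>E (UNIV::bool set).
        cntb L bb s * (2 * (1 - 2 / real L * lam * cntb L bb s * p^2) * (2 / real L * lam * cntb L bb s * (2 * p)))))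
     = p * Kf L lam (p^2)"
proof -
  let ?c = "2 / real L * lam"
  let ?S = "{..<L} \<rightarrow>\<^sub>E (UNIV::bool set)"
  have "(\<Sum>s\<in>?S. cntb L bb s * (2 * (1 - ?c * cntb L bb s * p^2) * (?c * cntb L bb s * (2 * p))))
     = (\<Sum>s\<in>?S. (4 * ?c * p) * cntb L bb s ^ 2 - (4 * ?c^2 * p^3) * cntb L bb s ^ 3)"
    by (rule sum.cong) (simp_all add: algebra_simps power2_eq_square power3_eq_cube)
  also have "\<dots> = (4 * ?c * p) * (\<Sum>s\<in>?S. cntb L bb s ^ 2) - (4 * ?c^2 * p^3) * (\<Sum>s\<in>?S. cntb L bb s ^ 3)"
    by (simp add: sum_subtractf sum_distrib_left)
  also have "\<dots> = (4 * ?c * p) * (real L * (real L + 1) * 2 ^ L / 4) - (4 * ?c^2 * p^3) * (real L ^ 2 * (real L + 3) * 2 ^ L / 8)"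
  proof -
    have "(\<Sum>s\<in>?S. cntb L bb s ^ 2) = real L * (real L + 1) * 2 ^ L / 4"
      "(\<Sum>s\<in>?S. cntb L bb s ^ 3) = real L ^ 2 * (real L + 3) * 2 ^ L / 8"
      using moments[of L bb] by linarith+
    then show ?thesis by (simp only:)
  qed
  finally have e: "(\<Sum>s\<in>?S. cntb L bb s * (2 * (1 - ?c * cntb L bb s * p^2) * (?c * cntb L bb s * (2 * p))))
     = (4 * ?c * p) * (real L * (real L + 1) * 2 ^ L / 4) - (4 * ?c^2 * p^3) * (real L ^ 2 * (real L + 3) * 2 ^ L / 8)" .
  show ?thesis using assms unfolding e Kf_def
    by (simp add: field_simps power2_eq_square power3_eq_cube)
qed

lemma gderiv_the:
  assumes "(f has_derivative (\<lambda>h. h \<bullet> D)) (at x)"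
  shows "(THE D. GDERIV f x :> D) = (D :: real^'d)"
proof (rule the_equality)
  show "GDERIV f x :> D" using assms by (simp add: gderiv_def)
  fix D' assume "GDERIV f x :> D'"
  then have "(\<lambda>h. h \<bullet> D') = (\<lambda>h. h \<bullet> D)" using assms has_derivative_unique by (auto simp: gderiv_def)
  then have "(D' - D) \<bullet> D' = (D' - D) \<bullet> D" by metis
  then have "(D' - D) \<bullet> (D' - D) = 0" by (simp add: inner_diff_right)
  then show "D' = D" by simp
qed

lemma grad0_eq:
  fixes m0 m1 a b :: "real^'d"
  assumes o: "norm m0 = 1" "norm m1 = 1" "m0 \<bullet> m1 = 0"
    and ab: "a \<bullet> m1 = 0" "b \<bullet> m0 = 0" and L: "L > 0"
  shows "grad0 (risk L lam m0 m1) a b = (- ((a \<bullet> m0) * Kf L lam ((a \<bullet> m0)^2))) *\<^sub>R m0"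
  unfolding grad0_def using gderiv_the[OF grad_deriv0[OF o ab]] sum_simp[OF L, of False lam "a \<bullet> m0"]
  by (simp add: mult.assoc)

lemma grad1_eq:
  fixes m0 m1 a b :: "real^'d"
  assumes o: "norm m0 = 1" "norm m1 = 1" "m0 \<bullet> m1 = 0"
    and ab: "a \<bullet> m1 = 0" "b \<bullet> m0 = 0" and L: "L > 0"
  shows "grad1 (risk L lam m0 m1) a b = (- ((b \<bullet> m1) * Kf L lam ((b \<bullet> m1)^2))) *\<^sub>R m1"
  unfolding grad1_def using gderiv_the[OF grad_deriv1[OF o ab]] sum_simp[OF L, of True lam "b \<bullet> m1"]
  by (simp add: mult.assoc)

lemma upd_lemma:
  fixes m m' a :: "real^'d"
  assumes "norm m = 1" "m \<bullet> m' = 0" "norm a = 1" "a \<bullet> m' = 0"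
  shows "norm (rgd_update gam a (k *\<^sub>R m)) = 1"
    "rgd_update gam a (k *\<^sub>R m) \<bullet> m' = 0"
    "rgd_update gam a (k *\<^sub>R m) \<bullet> m = ((a \<bullet> m) - gam * k * (1 - (a \<bullet> m)^2)) / sqrt (1 + gam^2 * k^2 * (1 - (a \<bullet> m)^2))"
proof -
  let ?p = "a \<bullet> m"
  define v where "v = a - gam *\<^sub>R (k *\<^sub>R m - (a \<bullet> (k *\<^sub>R m)) *\<^sub>R a)"
  have ru: "rgd_update gam a (k *\<^sub>R m) = (1 / norm v) *\<^sub>R v" unfolding rgd_update_def v_def Let_def by simp
  have mm: "m \<bullet> m = 1" "a \<bullet> a = 1" using assms by (auto simp: norm_eq_1)
  have pp: "?p^2 \<le> 1"
  proof -
    have "\<bar>?p\<bar> \<le> norm a * norm m" by (rule Cauchy_Schwarz_ineq2)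
    then have "\<bar>?p\<bar> \<le> 1" using assms by simp
    then show ?thesis by (simp add: abs_square_le_1)
  qed
  have vv: "v \<bullet> v = 1 + gam^2 * k^2 * (1 - ?p^2)"
    unfolding v_def by (simp add: inner_diff_left inner_diff_right inner_commute[of m a] mm algebra_simps power2_eq_square)
  have vpos: "v \<bullet> v > 0" unfolding vv using pp
    by (simp add: add_pos_nonneg)
  have nv: "norm v = sqrt (1 + gam^2 * k^2 * (1 - ?p^2))" using vv by (simp add: norm_eq_sqrt_inner)
  have nv0: "norm v > 0" using vpos by (simp add: norm_eq_sqrt_inner)
  show "norm (rgd_update gam a (k *\<^sub>R m)) = 1" unfolding ru using nv0 by simp
  have "v \<bullet> m' = 0" unfolding v_def using assms by (simp add: inner_diff_left)
  then show "rgd_update gam a (k *\<^sub>R m) \<bullet> m' = 0" unfolding ru by simp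
  have "v \<bullet> m = ?p - gam * k * (1 - ?p^2)"
    unfolding v_def by (simp add: inner_diff_left mm algebra_simps power2_eq_square)
  then show "rgd_update gam a (k *\<^sub>R m) \<bullet> m = (?p - gam * k * (1 - ?p^2)) / sqrt (1 + gam^2 * k^2 * (1 - ?p^2))"
    unfolding ru nv by simp
qed

definition phi :: "real \<Rightarrow> nat \<Rightarrow> real \<Rightarrow> real \<Rightarrow> real" where
  "phi gam L lam p = (p + gam * (p * Kf L lam (p^2)) * (1 - p^2)) / sqrt (1 + gam^2 * (p * Kf L lam (p^2))^2 * (1 - p^2))"

lemma phi_props:
  assumes L: "L > 0" and lam: "0 < lam" "lam \<le> (real L + 1) / (real L + 3)"
    and gam: "0 < gam" "gam * (2 / real L * lam * (real L + 1)) \<le> 1"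
    and p: "p^2 \<le> 1"
  shows "p > 0 \<Longrightarrow> phi gam L lam p > 0" "p < 0 \<Longrightarrow> phi gam L lam p < 0"
    "(phi gam L lam p)^2 \<ge> p^2 + gam * (lam^2 * (real L + 3) / real L) * p^2 * (1 - p^2)^2"
proof -
  define u where "u = p^2"
  define K where "K = Kf L lam u"
  define \<beta> where "\<beta> = 2 * lam^2 * (real L + 3) / real L"
  define \<alpha> where "\<alpha> = 2 / real L * lam * (real L + 1)"
  have u01: "0 \<le> u" "u \<le> 1" using p by (auto simp: u_def)
  have Lr: "real L > 0" using L by simp
  have lamb: "lam * (real L + 3) \<le> real L + 1" using lam by (simp add: field_simps)
  have Kb: "K \<ge> \<beta> * (1 - u)"
  proof -
    have "K - \<beta> * (1 - u) = 2 / real L * lam * (real L + 1 - lam * (real L + 3))"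
      unfolding K_def Kf_def \<beta>_def using Lr by (simp add: field_simps power2_eq_square)
    also have "\<dots> \<ge> 0" using lamb lam Lr by simp
    finally show ?thesis by simp
  qed
  have b0: "\<beta> \<ge> 0" unfolding \<beta>_def using Lr by simp
  have K0: "K \<ge> 0" using Kb b0 u01 by (meson diff_ge_0_iff_ge dual_order.trans mult_nonneg_nonneg)
  have Ka: "K \<le> \<alpha>"
  proof -
    have "\<alpha> - K = 2 / real L * lam * (lam * (real L + 3) * u)"
      unfolding K_def Kf_def \<alpha>_def using Lr by (simp add: field_simps)
    also have "\<dots> \<ge> 0" using lam Lr u01 by simp
    finally show ?thesis by simp
  qed
  have gK: "gam * K \<le> 1" using gam Ka unfolding \<alpha>_def
    by (meson less_imp_le mult_left_mono order_trans)
  have gK0: "gam * K \<ge> 0" using gam K0 by simp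
  define A where "A = 1 + gam * K * (1 - u)"
  define D where "D = 1 + gam^2 * u * K^2 * (1 - u)"
  have A1: "A \<ge> 1" unfolding A_def using gK0 u01 by simp
  have D1: "D \<ge> 1" unfolding D_def using gam u01 by simp
  have D2: "D \<le> 2"
  proof -
    have "u * (1 - u) \<le> 1" using u01 by (simp add: mult_le_one)
    moreover have "(gam * K)^2 \<le> 1" using gK gK0 by (simp add: abs_square_le_1)
    ultimately have "(gam * K)^2 * (u * (1 - u)) \<le> 1"
      using u01 by (simp add: mult_le_one)
    then show ?thesis unfolding D_def by (simp add: power_mult_distrib algebra_simps)
  qed
  have phiu: "phi gam L lam p = p * A / sqrt D"
    unfolding phi_def A_def D_def K_def u_def by (simp add: power_mult_distrib algebra_simps)
  have sD: "sqrt D > 0" using D1 by simp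
  show "p > 0 \<Longrightarrow> phi gam L lam p > 0" unfolding phiu using A1 sD by simp
  show "p < 0 \<Longrightarrow> phi gam L lam p < 0" unfolding phiu using A1 sD
    by (simp add: divide_neg_pos mult_neg_pos)
  have phisq: "(phi gam L lam p)^2 = u * A^2 / D"
    unfolding phiu u_def using D1 by (simp add: power_divide power_mult_distrib)
  have AD: "A^2 - D = gam * K * (1 - u) * (2 + gam * K * (1 - 2 * u))"
    unfolding A_def D_def by (simp add: algebra_simps power2_eq_square)
  have f2: "2 + gam * K * (1 - 2 * u) \<ge> 1"
  proof -
    have "gam * K * (1 - 2 * u) \<ge> gam * K * (-1)" using gK0 u01 by (intro mult_left_mono) auto
    then show ?thesis using gK by simp
  qed
  have "A^2 - D \<ge> gam * K * (1 - u)"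
    unfolding AD using mult_left_mono[OF f2, of "gam * K * (1 - u)"] gK0 u01 by simp
  moreover have "gam * K * (1 - u) \<ge> gam * (\<beta> * (1 - u)) * (1 - u)"
    using Kb gam u01 by (intro mult_right_mono mult_left_mono) auto
  ultimately have ADb: "A^2 - D \<ge> gam * \<beta> * (1 - u)^2" by (simp add: power2_eq_square algebra_simps)
  have ADn: "A^2 - D \<ge> 0" using ADb gam b0 by (meson order_trans mult_nonneg_nonneg less_imp_le zero_le_power2)
  have "(phi gam L lam p)^2 - u = u * (A^2 - D) / D" unfolding phisq using D1 by (simp add: field_simps)
  also have "\<dots> \<ge> u * (A^2 - D) / 2"
    using D1 D2 u01 ADn by (intro divide_left_mono) auto
  finally have "(phi gam L lam p)^2 - u \<ge> u * (gam * \<beta> * (1 - u)^2) / 2"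
    using ADb u01 by (smt (verit) divide_right_mono mult_left_mono)
  then show "(phi gam L lam p)^2 \<ge> p^2 + gam * (lam^2 * (real L + 3) / real L) * p^2 * (1 - p^2)^2"
  proof -
    have "u * (gam * \<beta> * (1 - u)^2) / 2 = gam * (lam^2 * (real L + 3) / real L) * p^2 * (1 - p^2)^2"
      unfolding \<beta>_def u_def using Lr by (simp add: field_simps)
    with \<open>(phi gam L lam p)^2 - u \<ge> u * (gam * \<beta> * (1 - u)^2) / 2\<close> show ?thesis unfolding u_def by linarith
  qed
qed



lemma seq_conv:
  fixes p :: "nat \<Rightarrow> real"
  assumes L: "L > 0" and lam: "0 < lam" "lam \<le> (real L + 1) / (real L + 3)"
    and gam: "0 < gam" "gam * (2 / real L * lam * (real L + 1)) \<le> 1"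
    and step: "\<And>k. p (Suc k) = phi gam L lam (p k)"
    and bnd: "\<And>k. (p k)^2 \<le> 1" and p0: "p 0 \<noteq> 0"
  shows "\<exists>s\<in>{-1, 1}. p \<longlonglongrightarrow> s"
proof -
  note P = phi_props[OF L lam gam]
  define s :: real where "s = (if p 0 > 0 then 1 else -1)"
  have sgn: "p k * s > 0" for k
  proof (induction k)
    case 0 then show ?case using p0 unfolding s_def by (auto simp: mult_neg_neg)
  next
    case (Suc k)
    show ?case
    proof (cases "p 0 > 0")
      case True
      then have "p k > 0" using Suc unfolding s_def by simp
      then show ?thesis using P(1)[OF bnd] True step unfolding s_def by simp
    next
      case False
      then have "p k < 0" using Suc unfolding s_def by (simp add: mult_less_0_iff)
      then show ?thesis using P(2)[OF bnd] False step unfolding s_def by (simp add: mult_neg_neg)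
    qed
  qed
  define u where "u k = (p k)^2" for k
  define C where "C = gam * (lam^2 * (real L + 3) / real L)"
  have C0: "C > 0" unfolding C_def using gam lam L by simp
  have ustep: "u (Suc k) \<ge> u k + C * u k * (1 - u k)^2" for k
    unfolding u_def C_def step using P(3)[OF bnd] by simp
  have u1: "u k \<le> 1" for k unfolding u_def using bnd by simp
  have un: "u k \<ge> 0" for k unfolding u_def by simp
  have inc: "incseq u"
  proof (rule incseq_SucI)
    fix k
    have "C * u k * (1 - u k)^2 \<ge> 0" using C0 un by simp
    then show "u k \<le> u (Suc k)" using ustep[of k] by linarith
  qed
  have u0: "u 0 > 0" unfolding u_def using p0 by simp
  obtain l where l: "u \<longlonglongrightarrow> l" using incseq_convergent[OF inc, of 1] u1 by blast
  have t1: "(\<lambda>k. u (Suc k) - u k) \<longlonglongrightarrow> l - l"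
    by (intro tendsto_diff LIMSEQ_Suc l)
  have t2: "(\<lambda>k. C * u 0 * (1 - u k)^2) \<longlonglongrightarrow> C * u 0 * (1 - l)^2"
    by (intro tendsto_intros l)
  have t3: "\<exists>N. \<forall>n\<ge>N. C * u 0 * (1 - u n)^2 \<le> u (Suc n) - u n"
  proof (intro exI allI impI)
    fix n
    have "u 0 \<le> u n" using inc by (simp add: incseqD)
    then have "C * u 0 * (1 - u n)^2 \<le> C * u n * (1 - u n)^2"
      using C0 by (intro mult_right_mono mult_left_mono) auto
    then show "C * u 0 * (1 - u n)^2 \<le> u (Suc n) - u n" using ustep[of n] by linarith
  qed
  have "C * u 0 * (1 - l)^2 \<le> l - l" by (rule LIMSEQ_le[OF t2 t1 t3])
  moreover have cu: "C * u 0 > 0" using C0 u0 by simp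
  ultimately have l1: "l = 1" using C0 u0 by (auto simp: mult_le_0_iff)
  have pk: "p k = s * sqrt (u k)" for k
  proof -
    have "sqrt (u k) = \<bar>p k\<bar>" unfolding u_def by simp
    show ?thesis
    proof (cases "p 0 > 0")
      case True
      then have "p k > 0" using sgn[of k] unfolding s_def by simp
      then show ?thesis using True \<open>sqrt (u k) = \<bar>p k\<bar>\<close> unfolding s_def by simp
    next
      case False
      then have "p k < 0" using sgn[of k] unfolding s_def by simp
      then show ?thesis using False \<open>sqrt (u k) = \<bar>p k\<bar>\<close> unfolding s_def by simp
    qed
  qed
  have "(\<lambda>k. s * sqrt (u k)) \<longlonglongrightarrow> s * sqrt l" by (intro tendsto_intros l)
  moreover have "p = (\<lambda>k. s * sqrt (u k))" using pk by (simp add: fun_eq_iff)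
  ultimately have "p \<longlonglongrightarrow> s" using l1 by simp
  moreover have "s \<in> {-1, 1}" unfolding s_def by simp
  ultimately show ?thesis by blast
qed

lemma vec_conv:
  fixes x :: "nat \<Rightarrow> real^'d"
  assumes "\<And>k. norm (x k) = 1" "norm m = 1" "(\<lambda>k. x k \<bullet> m) \<longlonglongrightarrow> s" "s \<in> {-1, 1}"
  shows "x \<longlonglongrightarrow> s *\<^sub>R m"
proof -
  have ss: "s * s = 1" using assms(4) by auto
  have mm: "m \<bullet> m = 1" "\<And>k. x k \<bullet> x k = 1" using assms by (auto simp: norm_eq_1)
  have nrm: "norm (x k - s *\<^sub>R m) = sqrt (2 - 2 * s * (x k \<bullet> m))" for k
    unfolding norm_eq_sqrt_inner
  proof -
    have "(x k - s *\<^sub>R m) \<bullet> (x k - s *\<^sub>R m) = x k \<bullet> x k - 2 * s * (x k \<bullet> m) + (s * s) * (m \<bullet> m)"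
      by (simp add: inner_diff_left inner_diff_right inner_commute[of m "x k"] algebra_simps)
    then show "sqrt ((x k - s *\<^sub>R m) \<bullet> (x k - s *\<^sub>R m)) = sqrt (2 - 2 * s * (x k \<bullet> m))"
      using mm ss by simp
  qed
  have "(\<lambda>k. sqrt (2 - 2 * s * (x k \<bullet> m))) \<longlonglongrightarrow> sqrt (2 - 2 * s * s)"
    by (intro tendsto_intros assms(3))
  then have "(\<lambda>k. norm (x k - s *\<^sub>R m)) \<longlonglongrightarrow> 0" unfolding nrm using ss by (simp add: mult.assoc)
  then show ?thesis by (simp add: Lim_null[where l="s *\<^sub>R m"] tendsto_norm_zero_iff)
qed

lemma one_step:
  fixes m0 m1 a b :: "real^'d"
  assumes o: "norm m0 = 1" "norm m1 = 1" "m0 \<bullet> m1 = 0" and L: "L > 0"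
    and ab: "(a, b) \<in> Mtilde m0 m1"
  shows "(rgd_update gam a (grad0 (risk L lam m0 m1) a b), rgd_update gam b (grad1 (risk L lam m0 m1) a b)) \<in> Mtilde m0 m1"
    "rgd_update gam a (grad0 (risk L lam m0 m1) a b) \<bullet> m0 = phi gam L lam (a \<bullet> m0)"
    "rgd_update gam b (grad1 (risk L lam m0 m1) a b) \<bullet> m1 = phi gam L lam (b \<bullet> m1)"
proof -
  have a: "norm a = 1" "m1 \<bullet> a = 0" "a \<bullet> m1 = 0" and b: "norm b = 1" "m0 \<bullet> b = 0" "b \<bullet> m0 = 0"
    using ab by (auto simp: Mtilde_def inner_commute)
  have o': "m1 \<bullet> m0 = 0" using o by (simp add: inner_commute)
  note g0 = grad0_eq[OF o a(3) b(3) L, of lam]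
  note g1 = grad1_eq[OF o a(3) b(3) L, of lam]
  note U0 = upd_lemma[OF o(1) o(3) a(1) a(3), of gam "- ((a \<bullet> m0) * Kf L lam ((a \<bullet> m0)^2))"]
  note U1 = upd_lemma[OF o(2) o' b(1) b(3), of gam "- ((b \<bullet> m1) * Kf L lam ((b \<bullet> m1)^2))"]
  show "(rgd_update gam a (grad0 (risk L lam m0 m1) a b), rgd_update gam b (grad1 (risk L lam m0 m1) a b)) \<in> Mtilde m0 m1"
    unfolding g0 g1 Mtilde_def using U0 U1 by (simp add: inner_commute)
  show "rgd_update gam a (grad0 (risk L lam m0 m1) a b) \<bullet> m0 = phi gam L lam (a \<bullet> m0)"
    unfolding g0 U0(3) phi_def by simp
  show "rgd_update gam b (grad1 (risk L lam m0 m1) a b) \<bullet> m1 = phi gam L lam (b \<bullet> m1)"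
    unfolding g1 U1(3) phi_def by simp
qed

lemma iter_props:
  fixes m0 m1 :: "real^'d"
  assumes o: "norm m0 = 1" "norm m1 = 1" "m0 \<bullet> m1 = 0" and L: "L > 0"
    and init: "init \<in> Mtilde m0 m1"
  shows "rgd_iter (risk L lam m0 m1) gam init k \<in> Mtilde m0 m1
    \<and> fst (rgd_iter (risk L lam m0 m1) gam init (Suc k)) \<bullet> m0 = phi gam L lam (fst (rgd_iter (risk L lam m0 m1) gam init k) \<bullet> m0)
    \<and> snd (rgd_iter (risk L lam m0 m1) gam init (Suc k)) \<bullet> m1 = phi gam L lam (snd (rgd_iter (risk L lam m0 m1) gam init k) \<bullet> m1)"
proof -
  have mem: "rgd_iter (risk L lam m0 m1) gam init k \<in> Mtilde m0 m1" for k
  proof (induction k)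
    case 0 then show ?case using init by simp
  next
    case (Suc k)
    obtain a b where e: "rgd_iter (risk L lam m0 m1) gam init k = (a, b)" by fastforce
    show ?case using one_step(1)[OF o L, of a b gam lam] Suc e by simp
  qed
  obtain a b where e: "rgd_iter (risk L lam m0 m1) gam init k = (a, b)" by fastforce
  show ?thesis using mem[of k] one_step[OF o L, of a b gam lam] e by simp
qed

lemma inner_sq_le:
  fixes x m :: "real^'d"
  assumes "norm x = 1" "norm m = 1"
  shows "(x \<bullet> m)^2 \<le> 1"
proof -
  have "\<bar>x \<bullet> m\<bar> \<le> norm x * norm m" by (rule Cauchy_Schwarz_ineq2)
  then show ?thesis using assms by (simp add: abs_square_le_1)
qed

lemma conv_main:
  fixes m0 m1 :: "real^'d"
  assumes o: "norm m0 = 1" "norm m1 = 1" "m0 \<bullet> m1 = 0" and L: "L > 0"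
    and lam: "0 < lam" "lam \<le> (real L + 1) / (real L + 3)"
    and gam: "0 < gam" "gam * (2 / real L * lam * (real L + 1)) \<le> 1"
    and init: "init \<in> Mtilde m0 m1" and nz: "fst init \<bullet> m0 \<noteq> 0" "snd init \<bullet> m1 \<noteq> 0"
  shows "\<exists>s0 \<in> {-1, 1}. \<exists>s1 \<in> {-1, 1}. rgd_iter (risk L lam m0 m1) gam init \<longlonglongrightarrow> (s0 *\<^sub>R m0, s1 *\<^sub>R m1)"
proof -
  let ?it = "rgd_iter (risk L lam m0 m1) gam init"
  note I = iter_props[OF o L init, of lam gam]
  have nrm: "norm (fst (?it k)) = 1" "norm (snd (?it k)) = 1" for k
    using I[of k] by (auto simp: Mtilde_def split: prod.splits)
  obtain s0 where s0: "s0 \<in> {-1, 1}" "(\<lambda>k. fst (?it k) \<bullet> m0) \<longlonglongrightarrow> s0"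
    using seq_conv[OF L lam gam, of "\<lambda>k. fst (?it k) \<bullet> m0"] I inner_sq_le[OF nrm(1) o(1)] nz by auto
  obtain s1 where s1: "s1 \<in> {-1, 1}" "(\<lambda>k. snd (?it k) \<bullet> m1) \<longlonglongrightarrow> s1"
    using seq_conv[OF L lam gam, of "\<lambda>k. snd (?it k) \<bullet> m1"] I inner_sq_le[OF nrm(2) o(2)] nz by auto
  have c0: "(\<lambda>k. fst (?it k)) \<longlonglongrightarrow> s0 *\<^sub>R m0" by (rule vec_conv[OF nrm(1) o(1) s0(2) s0(1)])
  have c1: "(\<lambda>k. snd (?it k)) \<longlonglongrightarrow> s1 *\<^sub>R m1" by (rule vec_conv[OF nrm(2) o(2) s1(2) s1(1)])
  have "(\<lambda>k. (fst (?it k), snd (?it k))) \<longlonglongrightarrow> (s0 *\<^sub>R m0, s1 *\<^sub>R m1)" by (rule tendsto_Pair[OF c0 c1])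
  then show ?thesis using s0(1) s1(1) by auto
qed

lemma chart_fst:
  fixes m0 m1 :: "real^'d"
  assumes o: "m0 \<bullet> m1 = 0" and c: "Mtilde_chart m0 m1 p \<in> Mtilde m0 m1" and z: "fst (Mtilde_chart m0 m1 p) \<bullet> m0 = 0"
  shows "fst p \<bullet> m0 = 0"
proof -
  define a where "a = fst p - (fst p \<bullet> m1) *\<^sub>R m1"
  have fa: "fst (Mtilde_chart m0 m1 p) = (1 / norm a) *\<^sub>R a" unfolding Mtilde_chart_def a_def Let_def by simp
  have "norm (fst (Mtilde_chart m0 m1 p)) = 1" using c by (auto simp: Mtilde_def split: prod.splits)
  then have na: "norm a \<noteq> 0" unfolding fa by auto
  have o': "m1 \<bullet> m0 = 0" using o by (simp add: inner_commute)
  have "a \<bullet> m0 = fst p \<bullet> m0" unfolding a_def using o' by (simp add: inner_diff_left)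
  then show ?thesis using z na unfolding fa by simp
qed

lemma chart_snd:
  fixes m0 m1 :: "real^'d"
  assumes o: "m0 \<bullet> m1 = 0" and c: "Mtilde_chart m0 m1 p \<in> Mtilde m0 m1" and z: "snd (Mtilde_chart m0 m1 p) \<bullet> m1 = 0"
  shows "snd p \<bullet> m1 = 0"
proof -
  define b where "b = snd p - (snd p \<bullet> m0) *\<^sub>R m0"
  have fb: "snd (Mtilde_chart m0 m1 p) = (1 / norm b) *\<^sub>R b" unfolding Mtilde_chart_def b_def Let_def by simp
  have "norm (snd (Mtilde_chart m0 m1 p)) = 1" using c by (auto simp: Mtilde_def split: prod.splits)
  then have nb: "norm b \<noteq> 0" unfolding fb by auto
  have "b \<bullet> m1 = snd p \<bullet> m1" unfolding b_def using o by (simp add: inner_diff_left)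
  then show ?thesis using z nb unfolding fb by simp
qed

theorem theorem2:
  fixes m0 m1 :: "real^'d" and L :: nat and lam :: real
  assumes "CARD('d) \<ge> 2" and "L \<ge> 2"
    and "norm m0 = 1" and "norm m1 = 1" and "m0 \<bullet> m1 = 0"
    and "0 < lam" and "lam \<le> (real L + 1) / (real L + 3)"
  shows "\<exists>gbar > 0. \<forall>gam. 0 < gam \<and> gam < gbar \<longrightarrow>
           Mtilde_null m0 m1
             {init \<in> Mtilde m0 m1.
                \<not> (\<exists>s0 \<in> {-1, 1}. \<exists>s1 \<in> {-1, 1}.
                     rgd_iter (risk L lam m0 m1) gam init
                       \<longlonglongrightarrow> (s0 *\<^sub>R m0, s1 *\<^sub>R m1))}"
proof -
  have o: "norm m0 = 1" "norm m1 = 1" "m0 \<bullet> m1 = 0" using assms by auto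
  have L: "L > 0" using assms by simp
  have lam: "0 < lam" "lam \<le> (real L + 1) / (real L + 3)" using assms by auto
  define \<alpha> where "\<alpha> = 2 / real L * lam * (real L + 1)"
  have a0: "\<alpha> > 0" unfolding \<alpha>_def using L lam by simp
  show ?thesis
  proof (intro exI[of _ "1 / \<alpha>"] conjI allI impI)
    show "1 / \<alpha> > 0" using a0 by simp
    fix gam assume g: "0 < gam \<and> gam < 1 / \<alpha>"
    have gam: "0 < gam" "gam * (2 / real L * lam * (real L + 1)) \<le> 1"
      using g a0 unfolding \<alpha>_def[symmetric] by (auto simp: field_simps)
    let ?B = "{init \<in> Mtilde m0 m1.
                \<not> (\<exists>s0 \<in> {-1, 1}. \<exists>s1 \<in> {-1, 1}.
                     rgd_iter (risk L lam m0 m1) gam init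
                       \<longlonglongrightarrow> (s0 *\<^sub>R m0, s1 *\<^sub>R m1))}"
    have sub: "{p. Mtilde_chart m0 m1 p \<in> ?B} \<subseteq> {x. (m0, 0) \<bullet> x = 0} \<union> {x. (0, m1) \<bullet> x = 0}"
    proof
      fix p assume "p \<in> {p. Mtilde_chart m0 m1 p \<in> ?B}"
      then have c: "Mtilde_chart m0 m1 p \<in> Mtilde m0 m1"
        and nc: "\<not> (\<exists>s0 \<in> {-1, 1}. \<exists>s1 \<in> {-1, 1}. rgd_iter (risk L lam m0 m1) gam (Mtilde_chart m0 m1 p)
                       \<longlonglongrightarrow> (s0 *\<^sub>R m0, s1 *\<^sub>R m1))" by auto
      have "fst (Mtilde_chart m0 m1 p) \<bullet> m0 = 0 \<or> snd (Mtilde_chart m0 m1 p) \<bullet> m1 = 0"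
        using conv_main[OF o L lam gam c] nc by blast
      then have "fst p \<bullet> m0 = 0 \<or> snd p \<bullet> m1 = 0"
        using chart_fst[OF o(3) c] chart_snd[OF o(3) c] by blast
      then show "p \<in> {x. (m0, 0) \<bullet> x = 0} \<union> {x. (0, m1) \<bullet> x = 0}"
        by (cases p) (auto simp: inner_commute)
    qed
    have n0: "(m0, 0::real^'d) \<noteq> 0" "(0::real^'d, m1) \<noteq> 0" using o by (auto simp: zero_prod_def)
    have "negligible ({x. (m0, 0::real^'d) \<bullet> x = 0} \<union> {x. (0::real^'d, m1) \<bullet> x = 0})"
      using negligible_hyperplane n0 by (intro negligible_Un) auto
    then have "negligible {p. Mtilde_chart m0 m1 p \<in> ?B}" using sub negligible_subset by blast
    then show "Mtilde_null m0 m1 ?B" unfolding Mtilde_null_def negligible_iff_null_sets by auto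
  qed
qed

end
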